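(* Let $\mathcal{M}_{\mathbb{P}}=(\mathcal{M},\mathbb{P})$ be an uncertain parametric MDP and let $\mathcal{U}_N=\{u_1,\dots,u_N\}$, $N\ge 1$, be a set of parameter instantiations sampled independently from $\mathbb{P}$. Let $\varphi$ be a specification (a measure, a comparison operator and a threshold) whose threshold $\lambda^*(\mathcal{U}_N)$ is chosen, for any sample set $\mathcal{U}_N$, such that every sample satisfies it, i.e. $\mathcal{M}[u]\models\varphi$ for all $u\in\mathcal{U}_N$. Fix a confidence probability $\beta\in(0,1)$. Then \[\mathbb{P}^N\Big\{F(\mathcal{M}_{\mathbb{P}},\varphi)\ \ge\ (1-\beta)^{1/N}\Big\}\ \ge\ \beta .\]
   Context: A parametric MDP (pMDP) is $\mathcal{M}=(S,\mathit{Act},s_I,V,\mathcal{P})$ with finite state set $S$, finite action set $\mathit{Act}$, initial state $s_I$, finite parameter set $V$, and transition function $\mathcal{P}:S\times\mathit{Act}\times S\to\mathbb{Q}[V]$ (polynomials in the parameters). The parameter space $\mathcal{V}_{\mathcal{M}}$ consists of instantiations $u:V\to\mathbb{R}$; $\mathcal{M}[u]$ is the MDP obtained by evaluating every polynomial at $u$. All instantiations are assumed to give well-defined MDPs and to be graph-preserving (nonzero transitions get values in $(0,1]$). An uncertain pMDP (upMDP) is a pair $\mathcal{M}_{\mathbb{P}}=(\mathcal{M},\mathbb{P})$ with $\mathbb{P}$ a (possibly unknown) probability distribution over $\mathcal{V}_{\mathcal{M}}$. A specification $\varphi$ consists of a measure on MDPs (e.g. maximal/minimal reachability probability of a target set,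 expected reward until reaching a target), a comparison operator in $\{<,\le,\ge,>\}$ and a threshold $\lambda$; $\mathcal{M}[u]\models\varphi$ means the measure's value for $\mathcal{M}[u]$ compares to $\lambda$ as prescribed. The satisfaction probability is $F(\mathcal{M}_{\mathbb{P}},\varphi)=\int_{\mathcal{V}_{\mathcal{M}}} I_\varphi(u)\,d\mathbb{P}(u)$, where $I_\varphi(u)=1$ iff $\mathcal{M}[u]\models\varphi$ and $0$ otherwise (assumed measurable). $\mathbb{P}^N$ denotes the $N$-fold product measure governing the i.i.d. sample set $\mathcal{U}_N$. *)

theory Defs
  imports "HOL-Probability.Probability"
begin

text \<open>Parametric MDPs. Transitions are functions of the parameter instantiation
  (generalising polynomials in the parameters).\<close>
record ('s, 'a, 'p) pmdp =
  pstates :: "'s set"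
  pacts :: "'a set"
  pinit :: 's
  pparams :: "'p set"
  ptrans :: "'s \<Rightarrow> 'a \<Rightarrow> 's \<Rightarrow> (('p \<Rightarrow> real) \<Rightarrow> real)"

record ('s, 'a) mdp =
  states :: "'s set"
  acts :: "'a set"
  init :: 's
  trans :: "'s \<Rightarrow> 'a \<Rightarrow> 's \<Rightarrow> real"

definition inst :: "('s, 'a, 'p) pmdp \<Rightarrow> ('p \<Rightarrow> real) \<Rightarrow> ('s, 'a) mdp" where
  "inst M u = \<lparr> states = pstates M, acts = pacts M, init = pinit M,
                trans = (\<lambda>s a s'. ptrans M s a s' u) \<rparr>"

datatype cmp = Lt | Le | Ge | Gt

fun cmp_holds :: "cmp \<Rightarrow> ereal \<Rightarrow> ereal \<Rightarrow> bool" where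
  "cmp_holds Lt x l = (x < l)"
| "cmp_holds Le x l = (x \<le> l)"
| "cmp_holds Ge x l = (x \<ge> l)"
| "cmp_holds Gt x l = (x > l)"

text \<open>A specification: a measure on MDPs (e.g. max/min reachability probability,
  expected reward; values in the extended reals), a comparison operator, a threshold.\<close>
type_synonym ('s, 'a) spec = "(('s, 'a) mdp \<Rightarrow> ereal) \<times> cmp \<times> ereal"

definition models :: "('s, 'a) mdp \<Rightarrow> ('s, 'a) spec \<Rightarrow> bool" where
  "models D \<phi> = (case \<phi> of (m, c, l) \<Rightarrow> cmp_holds c (m D) l)"

definition sat_prob :: "('s, 'a, 'p) pmdp \<Rightarrow> ('p \<Rightarrow> real) measure \<Rightarrow> ('s, 'a) spec \<Rightarrow> real" where
  "sat_prob M P \<phi> = (LINT u|P. (if models (inst M u) \<phi> then 1 else 0))"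

end

theory Submission
  imports Defs
begin

lemma ereal_seq_above:
  fixes l0 :: ereal
  assumes "l0 < \<infinity>"
  shows "\<exists>f. decseq f \<and> (\<forall>n. l0 < f n) \<and> (\<forall>l>l0. \<exists>n. f n < l)"
proof (cases l0)
  case (real r)
  define f where "f n = ereal (r + 1 / Suc n)" for n
  have "decseq f" unfolding f_def decseq_def
    by (auto intro!: divide_left_mono simp: frac_le)
  moreover have "\<forall>n. l0 < f n" using real by (simp add: f_def)
  moreover have "\<exists>n. f n < l" if "l > l0" for l
  proof (cases l)
    case (real s)
    with that \<open>l0 = ereal r\<close> have "s - r > 0" by simp
    then obtain n where "1 / Suc n < s - r"
      using nat_approx_posE by blast
    then have "r + 1 / Suc n < s" by linarith
    then have "f n < l" using real by (simp add: f_def)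
    then show ?thesis by blast
  next
    case PInf then show ?thesis by (auto simp: f_def)
  next
    case MInf then show ?thesis using that by simp
  qed
  ultimately show ?thesis by blast
next
  case PInf with assms show ?thesis by simp
next
  case MInf
  define f where "f n = ereal (- real n)" for n
  have "decseq f" unfolding f_def decseq_def by auto
  moreover have "\<forall>n. l0 < f n" using MInf by (simp add: f_def)
  moreover have "\<exists>n. f n < l" if "l > l0" for l
  proof (cases l)
    case (real s)
    obtain n :: nat where "n > - s" using reals_Archimedean2 by blast
    then show ?thesis using real by (auto simp: f_def intro!: exI[of _ n])
  next
    case PInf then show ?thesis by (auto simp: f_def)
  next
    case MInf then show ?thesis using that \<open>l0 = -\<infinity>\<close> by simp
  qed
  ultimately show ?thesis by blast
qed

lemma union_bound:
  fixes S :: "ereal \<Rightarrow> 'p set" and t :: real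
  assumes P: "prob_space P" and t0: "0 \<le> t"
    and S: "\<And>l. S l \<in> sets P"
    and anti: "\<And>l l'. l \<le> l' \<Longrightarrow> S l' \<subseteq> S l"
  defines "L \<equiv> {l. measure P (S l) < t}"
  shows "(\<Union>l\<in>L. S l) \<in> sets P \<and> measure P (\<Union>l\<in>L. S l) \<le> t
     \<and> - L \<in> sets (borel :: ereal measure)"
proof -
  interpret prob_space P by fact
  have gmono: "measure P (S l') \<le> measure P (S l)" if "l \<le> l'" for l l'
    using anti[OF that] S by (simp add: finite_measure_mono)
  have upc: "l' \<in> L" if "l \<in> L" "l \<le> l'" for l l'
    using that gmono[OF that(2)] unfolding L_def by simp
  show ?thesis
  proof (cases "L = {}")
    case True then show ?thesis using t0 by simp
  next
    case False
    define l0 where "l0 = Inf L"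
    have le: "l0 \<le> l" if "l \<in> L" for l using that by (simp add: l0_def Inf_lower)
    show ?thesis
    proof (cases "l0 \<in> L")
      case True
      have U1: "(\<Union>l\<in>L. S l) \<subseteq> S l0"
        by (rule UN_least, rule anti, rule le)
      have U2: "S l0 \<subseteq> (\<Union>l\<in>L. S l)" by (rule UN_upper[OF True])
      have CL: "-L = {..<l0}"
      proof (rule set_eqI)
        fix x
        show "x \<in> -L \<longleftrightarrow> x \<in> {..<l0}"
        proof
          assume "x \<in> -L"
          then have "x \<notin> L" by simp
          then have "\<not> l0 \<le> x" using upc[OF True] by blast
          then show "x \<in> {..<l0}" by simp
        next
          assume "x \<in> {..<l0}"
          then have "\<not> l0 \<le> x" by simp
          then show "x \<in> -L" using le by blast
        qed
      qed
      have "measure P (S l0) \<le> t" using True unfolding L_def by simp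
      moreover have "(\<Union>l\<in>L. S l) = S l0" using U1 U2 by (rule subset_antisym)
      ultimately show ?thesis using S CL by simp
    next
      case nin: False
      have inL: "l \<in> L" if "l > l0" for l
      proof -
        from that obtain l' where "l' \<in> L" "l' < l" unfolding l0_def by (auto simp: Inf_less_iff)
        then show ?thesis using upc[of l' l] by simp
      qed
      have CL: "-L = {..l0}"
      proof (rule set_eqI)
        fix x
        show "x \<in> -L \<longleftrightarrow> x \<in> {..l0}"
        proof
          assume "x \<in> -L"
          then have "x \<notin> L" by simp
          then have "\<not> l0 < x" using inL by blast
          then show "x \<in> {..l0}" by simp
        next
          assume "x \<in> {..l0}"
          then have "x \<le> l0" by simp
          then show "x \<in> -L" using le nin by (metis ComplI antisym)
        qed
      qed
      from False obtain l1 where "l1 \<in> L" by blast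
      then have "l0 \<le> l1" "l0 \<noteq> l1" using le nin by auto
      then have "l0 < l1" by simp
      then have "l0 < \<infinity>" using less_le_trans by fastforce
      then obtain f where f: "decseq f" "\<And>n. l0 < f n" "\<And>l. l > l0 \<Longrightarrow> \<exists>n. f n < l"
        using ereal_seq_above by blast
      have U1: "(\<Union>l\<in>L. S l) \<subseteq> (\<Union>n. S (f n))"
      proof (rule UN_least)
        fix l assume "l \<in> L"
        then have "l0 \<le> l" "l0 \<noteq> l" using le nin by auto
        then have "l > l0" by simp
        then obtain n where "f n < l" using f(3) by blast
        then have "S l \<subseteq> S (f n)" by (intro anti) simp
        then show "S l \<subseteq> (\<Union>n. S (f n))" by blast
      qed
      have U2: "(\<Union>n. S (f n)) \<subseteq> (\<Union>l\<in>L. S l)"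
      proof (rule UN_least)
        fix n
        have "f n \<in> L" by (rule inL[OF f(2)])
        then show "S (f n) \<subseteq> (\<Union>l\<in>L. S l)" by (rule UN_upper)
      qed
      have inc: "incseq (\<lambda>n. S (f n))" unfolding incseq_def
      proof (intro allI impI)
        fix m n :: nat assume "m \<le> n"
        then have "f n \<le> f m" using f(1) by (simp add: decseq_def)
        then show "S (f m) \<subseteq> S (f n)" by (rule anti)
      qed
      have lim: "(\<lambda>n. measure P (S (f n))) \<longlonglongrightarrow> measure P (\<Union>n. S (f n))"
        by (rule finite_Lim_measure_incseq) (use S inc in auto)
      have bnd: "measure P (S (f n)) \<le> t" for n
        using inL[OF f(2)[of n]] unfolding L_def by simp
      have "measure P (\<Union>n. S (f n)) \<le> t"
        using lim by (rule LIMSEQ_le_const2) (use bnd in auto)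
      moreover have "(\<Union>n. S (f n)) \<in> sets P" using S by auto
      moreover have "(\<Union>l\<in>L. S l) = (\<Union>n. S (f n))" using U1 U2 by (rule subset_antisym)
      ultimately show ?thesis using CL by simp
    qed
  qed
qed


lemma core:
  fixes S :: "ereal \<Rightarrow> 'p set" and lam :: "(nat \<Rightarrow> 'p) \<Rightarrow> ereal"
    and N :: nat and \<beta> :: real
  assumes P: "prob_space P" and N: "N \<ge> 1" and b0: "0 < \<beta>" and b1: "\<beta> < 1"
    and S: "\<And>l. S l \<in> sets P"
    and anti: "\<And>l l'. l \<le> l' \<Longrightarrow> S l' \<subseteq> S l"
    and lam_meas: "lam \<in> borel_measurable (PiM {..<N} (\<lambda>_. P))"
    and sat: "\<And>us i. us \<in> space (PiM {..<N} (\<lambda>_. P)) \<Longrightarrow> i < N \<Longrightarrow> us i \<in> S (lam us)"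
  shows "measure (PiM {..<N} (\<lambda>_. P))
           {us \<in> space (PiM {..<N} (\<lambda>_. P)).
              measure P (S (lam us)) \<ge> (1 - \<beta>) powr (1 / real N)} \<ge> \<beta>"
proof -
  define PM where "PM = PiM {..<N} (\<lambda>_. P)"
  define t where "t = (1 - \<beta>) powr (1 / real N)"
  define L where "L = {l. measure P (S l) < t}"
  define U where "U = (\<Union>l\<in>L. S l)"
  have t0: "0 \<le> t" unfolding t_def by simp
  have tN: "t ^ N = 1 - \<beta>" unfolding t_def using N b1
    by (simp add: powr_realpow[symmetric] powr_powr)
  have PS: "product_sigma_finite (\<lambda>_::nat. P)"
    by (simp add: product_sigma_finite_def prob_space_imp_sigma_finite P)
  have FM: "finite_measure P" using P unfolding prob_space_def by blast
  have PMp: "prob_space PM" unfolding PM_def by (rule prob_space_PiM) (use P in auto)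
  from union_bound[OF P t0 S anti] 
  have U: "U \<in> sets P" "measure P U \<le> t" and CL: "-L \<in> sets (borel :: ereal measure)"
    unfolding U_def L_def by auto
  define G where "G = {us \<in> space PM. measure P (S (lam us)) \<ge> t}"
  have G_eq: "G = lam -` (-L) \<inter> space PM" unfolding G_def L_def by (auto simp: not_less)
  have Gm: "G \<in> sets PM" unfolding G_eq using measurable_sets[OF lam_meas CL] by (simp add: PM_def)
  have sub: "space PM - G \<subseteq> PiE {..<N} (\<lambda>_. U)"
  proof
    fix us assume us: "us \<in> space PM - G"
    then have sp: "us \<in> space PM" by simp
    then have "lam us \<in> L" using us unfolding G_def L_def by auto
    then have "S (lam us) \<subseteq> U" unfolding U_def by blast
    then have "\<forall>i<N. us i \<in> U" using sat sp unfolding PM_def by blast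
    moreover have "us \<in> extensional {..<N}" using sp unfolding PM_def space_PiM by (simp add: PiE_def)
    ultimately show "us \<in> PiE {..<N} (\<lambda>_. U)" by (auto simp: PiE_def Pi_def)
  qed
  have "emeasure PM (PiE {..<N} (\<lambda>_. U)) = (\<Prod>i\<in>{..<N}. emeasure P U)"
    unfolding PM_def
    by (rule product_sigma_finite.emeasure_PiM) (use PS U in auto)
  also have "\<dots> = ennreal (measure P U ^ N)"
    using finite_measure.emeasure_eq_measure[OF FM] by (simp add: ennreal_power)
  finally have "measure PM (PiE {..<N} (\<lambda>_. U)) = measure P U ^ N"
    by (intro measure_eq_emeasure_eq_ennreal) simp_all
  also have "\<dots> \<le> t ^ N" by (rule power_mono[OF U(2) measure_nonneg])
  finally have m1: "measure PM (PiE {..<N} (\<lambda>_. U)) \<le> 1 - \<beta>" using tN by simp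
  have PiEm: "PiE {..<N} (\<lambda>_. U) \<in> sets PM" unfolding PM_def
    by (rule sets_PiM_I_finite) (use U in auto)
  interpret PMs: prob_space PM by (rule PMp)
  have "measure PM (space PM - G) \<le> 1 - \<beta>"
    using PMs.finite_measure_mono[OF sub PiEm] m1 by simp
  moreover have "measure PM (space PM - G) = 1 - measure PM G"
    using PMs.prob_compl[OF Gm] .
  ultimately have "measure PM G \<ge> \<beta>" by simp
  then show ?thesis unfolding G_def PM_def t_def .
qed

theorem theorem1:
  fixes M :: "('s, 'a, 'p) pmdp"
    and P :: "('p \<Rightarrow> real) measure"
    and msr :: "('s, 'a) mdp \<Rightarrow> ereal"
    and c :: cmp
    and lam :: "(nat \<Rightarrow> 'p \<Rightarrow> real) \<Rightarrow> ereal"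
    and N :: nat
    and \<beta> :: real
  assumes "prob_space P"
    and "N \<ge> 1"
    and "0 < \<beta>" and "\<beta> < 1"
    and I_meas: "\<And>l. {u \<in> space P. models (inst M u) (msr, c, l)} \<in> sets P"
    and lam_meas: "lam \<in> borel_measurable (PiM {..<N} (\<lambda>_. P))"
    and lam_sat: "\<And>us i. us \<in> space (PiM {..<N} (\<lambda>_. P)) \<Longrightarrow> i < N \<Longrightarrow>
                    models (inst M (us i)) (msr, c, lam us)"
  shows "measure (PiM {..<N} (\<lambda>_. P))
           {us \<in> space (PiM {..<N} (\<lambda>_. P)).
              sat_prob M P (msr, c, lam us) \<ge> (1 - \<beta>) powr (1 / real N)} \<ge> \<beta>"
proof -
  define Sc where "Sc l = {u \<in> space P. models (inst M u) (msr, c, l)}" for l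
  define PM where "PM = PiM {..<N} (\<lambda>_. P)"
  define t where "t = (1 - \<beta>) powr (1 / real N)"
  have Sm: "Sc l \<in> sets P" for l unfolding Sc_def by (rule I_meas)
  have sp: "sat_prob M P (msr, c, l) = measure P (Sc l)" for l
  proof -
    have "sat_prob M P (msr, c, l) = (LINT u|P. indicator (Sc l) u)"
      unfolding sat_prob_def
      by (rule Bochner_Integration.integral_cong) (auto simp: Sc_def indicator_def)
    also have "\<dots> = measure P (Sc l)" using sets.sets_into_space[OF Sm[of l]]
      by (simp add: Int_absorb2)
    finally show ?thesis .
  qed
  have ui: "us i \<in> space P" if "us \<in> space PM" "i < N" for us i
    using that unfolding PM_def space_PiM by auto
  have sat: "us i \<in> Sc (lam us)" if "us \<in> space PM" "i < N" for us i
    using ui[OF that] lam_sat[OF that[unfolded PM_def]] unfolding Sc_def by simp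
  have eqset: "{us \<in> space PM. sat_prob M P (msr, c, lam us) \<ge> t}
      = {us \<in> space PM. measure P (Sc (lam us)) \<ge> t}" by (simp add: sp)
  have "measure PM {us \<in> space PM. measure P (Sc (lam us)) \<ge> t} \<ge> \<beta>"
  proof (cases "c = Ge \<or> c = Gt")
    case True
    have anti: "Sc l' \<subseteq> Sc l" if "l \<le> l'" for l l'
      using True that unfolding Sc_def models_def by (auto intro: order_trans less_le_trans)
    show ?thesis unfolding PM_def t_def
      by (rule core[OF assms(1-4) Sm anti lam_meas]) (use sat in \<open>auto simp: PM_def\<close>)
  next
    case False
    then have cc: "c = Le \<or> c = Lt" by (cases c) auto
    have anti: "Sc (- l') \<subseteq> Sc (- l)" if "l \<le> l'" for l l'
    proof -
      have h0: "- l' \<le> - l" using that by simp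
      have h1: "z \<le> - l" if "z \<le> - l'" for z :: ereal using order_trans[OF that h0] .
      have h2: "z < - l" if "z < - l'" for z :: ereal using less_le_trans[OF that h0] .
      show ?thesis
        using cc unfolding Sc_def models_def by (auto dest: h1 h2)
    qed
    have lm: "(\<lambda>us. - lam us) \<in> borel_measurable (PiM {..<N} (\<lambda>_. P))"
      using lam_meas by measurable
    have "measure PM {us \<in> space PM. measure P (Sc (- (- lam us))) \<ge> t} \<ge> \<beta>"
      unfolding PM_def t_def
      by (rule core[where S="\<lambda>l. Sc (- l)", OF assms(1-4) Sm anti lm]) (use sat in \<open>auto simp: PM_def\<close>)
    then show ?thesis by simp
  qed
  then show ?thesis using eqset unfolding PM_def t_def by simp
qed

end
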